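(* The following identities hold in $Y[[u^{-1}]]$: (1) $t_{1,1}(u-1)t_{1,2}(u)=t_{1,2}(u-1)t_{1,1}(u)$; (2) $t_{1,1}(u)t_{2,1}(u-1)=t_{2,1}(u)t_{1,1}(u-1)$; (3) $t_{1,2}(u-1)t_{1,2}(u)=0$; (4) $(k+1)t_{2,1}(u)t_{1,1}(u-k)=k\,t_{1,1}(u-k)t_{2,1}(u)+t_{2,1}(u-k)t_{1,1}(u)$ for every $k\in\mathbb{Z}_{\ge0}$.
   Context: Let $k$ be an algebraically closed field of characteristic $p>2$ (the integer $k$ in (4) is a separate variable). Fix parities $|1|=0$, $|2|=1$. The super Yangian $Y=Y_{1|1}$ is the associative superalgebra over $k$ generated by $t_{i,j}^{(r)}$ ($1\le i,j\le2$, $r>0$) of parity $|i|+|j|\pmod2$, with relations $[t_{i,j}^{(r)},t_{k,l}^{(s)}]=(-1)^{|i||j|+|i||k|+|j||k|}\sum_{t=0}^{\min(r,s)-1}(t_{k,j}^{(t)}t_{i,l}^{(r+s-1-t)}-t_{k,j}^{(r+s-1-t)}t_{i,l}^{(t)})$ (supercommutator), $t_{i,j}^{(0)}=\delta_{ij}$. Put $t_{i,j}(u)=\sum_{r\ge0}t_{i,j}^{(r)}u^{-r}$; shifted series $t_{i,j}(u-c)$ are expanded in $u^{-1}$. *)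

theory Defs
  imports "HOL-Computational_Algebra.Computational_Algebra"
begin

definition par :: "nat \<Rightarrow> nat" where
  "par i = (if i = 2 then 1 else 0)"

(* t_{i,j}^{(r)} with the convention t_{i,j}^{(0)} = delta_{ij};
   g i j r is the generator for r > 0 *)
definition T :: "(nat \<Rightarrow> nat \<Rightarrow> nat \<Rightarrow> 'a::ring_1) \<Rightarrow> nat \<Rightarrow> nat \<Rightarrow> nat \<Rightarrow> 'a" where
  "T g i j r = (if r = 0 then (if i = j then 1 else 0) else g i j r)"

(* the defining relations of Y_{1|1} (supercommutator written out) *)
definition yangian_rels :: "(nat \<Rightarrow> nat \<Rightarrow> nat \<Rightarrow> 'a::ring_1) \<Rightarrow> bool" where
  "yangian_rels g \<longleftrightarrow>
     (\<forall>i\<in>{1,2}. \<forall>j\<in>{1,2}. \<forall>k\<in>{1,2}. \<forall>l\<in>{1,2}. \<forall>r>0. \<forall>s>0.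
        T g i j r * T g k l s
          - (-1) ^ ((par i + par j) * (par k + par l)) * T g k l s * T g i j r
        = (-1) ^ (par i * par j + par i * par k + par j * par k) *
          (\<Sum>t = 0..<min r s. T g k j t * T g i l (r + s - 1 - t)
                               - T g k j (r + s - 1 - t) * T g i l t))"

(* the series f(u - c) = sum_r f r (u - c)^(-r), expanded in the variable X = u^(-1):
   (u-c)^(-r) = sum_m binom(r+m-1, m) c^m u^(-r-m) for r >= 1 *)
definition shser :: "(nat \<Rightarrow> 'a::ring_1) \<Rightarrow> int \<Rightarrow> 'a fps" where
  "shser f c = Abs_fps (\<lambda>n. if n = 0 then f 0
      else (\<Sum>r = 1..n. of_int (c ^ (n - r)) * of_nat ((n - 1) choose (n - r)) * f r))"

definition tser :: "(nat \<Rightarrow> nat \<Rightarrow> nat \<Rightarrow> 'a::ring_1) \<Rightarrow> nat \<Rightarrow> nat \<Rightarrow> int \<Rightarrow> 'a fps" where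
  "tser g i j c = shser (T g i j) c"

end

theory Submission
  imports Defs
begin


definition intc :: "'a::ring_1 fps \<Rightarrow> bool" where
  "intc P \<longleftrightarrow> (\<exists>h. \<forall>n. P$n = of_int (h n))"

lemma intc_commute:
  fixes P Q :: "'a::ring_1 fps"
  assumes "intc P" shows "P * Q = Q * P"
proof (rule fps_ext)
  fix n
  obtain h where h: "\<And>n. P$n = of_int (h n)" using assms unfolding intc_def by blast
  have "(P*Q)$n = (\<Sum>i=0..n. P$i * Q$(n-i))" by (simp add: fps_mult_nth)
  also have "\<dots> = (\<Sum>i=0..n. Q$(n-i) * P$i)"
    by (rule sum.cong[OF refl]) (simp add: h mult_of_int_commute)
  also have "\<dots> = (\<Sum>i=0..n. Q$(n - (n - i)) * P$(n-i))"
    using sum.atLeastAtMost_rev[of "\<lambda>i. Q$(n-i) * P$i" 0 n] by simp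
  also have "\<dots> = (\<Sum>i=0..n. Q$i * P$(n-i))"
    by (rule sum.cong[OF refl]) simp
  also have "\<dots> = (Q*P)$n" by (simp add: fps_mult_nth)
  finally show "(P*Q)$n = (Q*P)$n" .
qed

lemma intc_mult:
  fixes P Q :: "'a::ring_1 fps"
  assumes "intc P" "intc Q" shows "intc (P * Q)"
proof -
  obtain h where h: "\<And>n. P$n = of_int (h n)" using assms unfolding intc_def by blast
  obtain k where k: "\<And>n. Q$n = of_int (k n)" using assms unfolding intc_def by blast
  show ?thesis unfolding intc_def
    by (rule exI[of _ "\<lambda>n. \<Sum>i=0..n. h i * k (n-i)"]) (simp add: fps_mult_nth h k)
qed

lemma intc_one: "intc (1::'a::ring_1 fps)"
  unfolding intc_def by (rule exI[of _ "\<lambda>n. if n = 0 then 1 else 0"]) simp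

lemma intc_power:
  fixes P :: "'a::ring_1 fps"
  assumes "intc P" shows "intc (P ^ n)"
  by (induction n) (simp_all add: intc_one intc_mult assms)

definition Gs :: "int \<Rightarrow> 'a::ring_1 fps" where
  "Gs c = Abs_fps (\<lambda>n. if n = 0 then 0 else of_int (c ^ (n - 1)))"

lemma intc_Gs: "intc (Gs c)"
  unfolding intc_def Gs_def
  by (rule exI[of _ "\<lambda>n. if n = 0 then 0 else c ^ (n - 1)"]) simp

lemma Gs_nth: "(Gs c :: 'a::ring_1 fps) $ n = (if n = 0 then 0 else of_int (c ^ (n - 1)))"
  by (simp add: Gs_def)

lemma Gs_eq: "(Gs c :: 'a::ring_1 fps) = fps_X + fps_const (of_int c) * (fps_X * Gs c)"
proof (rule fps_ext)
  fix n show "(Gs c :: 'a fps) $ n = (fps_X + fps_const (of_int c) * (fps_X * Gs c)) $ n"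
    by (cases n) (auto simp: Gs_nth power_Suc[symmetric] simp del: power_Suc)
qed

definition Wi :: "int \<Rightarrow> nat \<Rightarrow> nat \<Rightarrow> int" where
  "Wi c n r = (if r = 0 then (if n = 0 then 1 else 0)
     else if r \<le> n then c ^ (n - r) * int ((n - 1) choose (n - r)) else 0)"

lemma Wi_rec: "Wi c (Suc n) (Suc r) = Wi c n r + c * Wi c n (Suc r)"
proof (cases "r = 0")
  case True
  show ?thesis
  proof (cases n)
    case 0
    show ?thesis unfolding True 0 by (simp add: Wi_def)
  next
    case (Suc m)
    have a: "Wi c (Suc n) (Suc 0) = c ^ Suc m" unfolding Suc by (simp add: Wi_def)
    have b: "Wi c n 0 = 0" unfolding Suc by (simp add: Wi_def)
    have d: "Wi c n (Suc 0) = c ^ m" unfolding Suc by (simp add: Wi_def)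
    show ?thesis unfolding True a b d by simp
  qed
next
  case False
  show ?thesis
  proof (cases "Suc r \<le> n")
    case True
    then obtain m where m: "n - r = Suc m" by (metis Suc_diff_le diff_Suc_Suc)
    have e: "(n choose (n - r)) = ((n - 1) choose (n - r - 1)) + ((n - 1) choose (n - r))"
      using choose_reduce_nat[of n "n - r"] m True by simp
    have e2: "n - r - 1 = n - Suc r" by simp
    have w1: "Wi c (Suc n) (Suc r) = c^(n-r) * int (n choose (n-r))"
      using True by (simp add: Wi_def)
    have w2: "Wi c n r = c^(n-r) * int ((n-1) choose (n-r))"
      using True False by (simp add: Wi_def)
    have w3: "Wi c n (Suc r) = c^(n - Suc r) * int ((n-1) choose (n - Suc r))"
      using True by (simp add: Wi_def)
    have m2: "n - Suc r = m" using m by simp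
    have p: "c ^ (n - r) = c * c ^ (n - Suc r)" unfolding m m2 by simp
    show ?thesis unfolding w1 w2 w3 e e2 p by (simp add: algebra_simps)
  next
    case False2: False
    show ?thesis
    proof (cases "r = n")
      case True
      have a: "Wi c (Suc n) (Suc r) = 1" using True by (simp add: Wi_def)
      have b: "Wi c n r = 1" using True False by (simp add: Wi_def)
      have d: "Wi c n (Suc r) = 0" using True by (simp add: Wi_def)
      show ?thesis unfolding a b d by simp
    next
      case False3: False
      have a: "Wi c (Suc n) (Suc r) = 0" using False2 False3 by (simp add: Wi_def)
      have b: "Wi c n r = 0" using False2 False3 False by (simp add: Wi_def)
      have d: "Wi c n (Suc r) = 0" using False2 by (simp add: Wi_def)
      show ?thesis unfolding a b d by simp
    qed
  qed
qed

lemma Gs_pow_nth: "(Gs c ^ r :: 'a::ring_1 fps) $ n = of_int (Wi c n r)"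
proof (induction n arbitrary: r)
  case 0
  show ?case by (induction r) (simp_all add: Wi_def Gs_nth)
next
  case (Suc n)
  show ?case
  proof (cases r)
    case 0 thus ?thesis by (simp add: Wi_def)
  next
    case (Suc r')
    have "(Gs c :: 'a fps) * Gs c ^ r' = (fps_X + fps_const (of_int c) * (fps_X * Gs c)) * Gs c ^ r'"
      by (rule arg_cong[where f="\<lambda>x. x * Gs c ^ r'"], rule Gs_eq)
    also have "\<dots> = fps_X * Gs c ^ r' + fps_const (of_int c) * (fps_X * (Gs c * Gs c ^ r'))"
      by (simp only: distrib_right mult.assoc)
    finally have eq: "(Gs c :: 'a fps) ^ Suc r' = fps_X * Gs c ^ r' + fps_const (of_int c) * (fps_X * (Gs c ^ Suc r'))"
      by (simp only: power_Suc)
    have "((Gs c :: 'a fps) ^ Suc r') $ Suc n = (fps_X * Gs c ^ r' + fps_const (of_int c) * (fps_X * (Gs c ^ Suc r'))) $ Suc n"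
      by (rule arg_cong[where f="\<lambda>f. f $ Suc n", OF eq])
    also have "\<dots> = (Gs c ^ r') $ n + of_int c * (Gs c ^ Suc r') $ n"
      by (simp only: fps_add_nth fps_mult_left_const_nth fps_X_mult_nth) simp
    also have "\<dots> = of_int (Wi c n r') + of_int c * of_int (Wi c n (Suc r'))"
      by (simp only: Suc.IH)
    also have "\<dots> = of_int (Wi c (Suc n) (Suc r'))"
      by (simp only: Wi_rec of_int_add of_int_mult)
    finally show ?thesis unfolding \<open>r = Suc r'\<close> .
  qed
qed

lemma Gs_pow_small: "n < r \<Longrightarrow> (Gs c ^ r :: 'a::ring_1 fps) $ n = 0"
  by (simp add: Gs_pow_nth Wi_def)

lemma mult_small:
  fixes P Q :: "'a::ring_1 fps"
  assumes "\<And>i. i < a \<Longrightarrow> P$i = 0" "\<And>j. j < b \<Longrightarrow> Q$j = 0" "n < a + b"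
  shows "(P * Q) $ n = 0"
  unfolding fps_mult_nth
proof (rule sum.neutral, rule ballI)
  fix i assume "i \<in> {0..n}"
  show "P $ i * Q $ (n - i) = 0"
  proof (cases "i < a")
    case True thus ?thesis using assms(1) by simp
  next
    case False thus ?thesis using assms(2,3) \<open>i \<in> {0..n}\<close> by simp
  qed
qed

lemma X_cancel:
  fixes f g :: "'a::ring_1 fps"
  assumes "fps_X * f = fps_X * g" shows "f = g"
proof (rule fps_ext)
  fix n
  have "(fps_X * f) $ Suc n = (fps_X * g) $ Suc n" using assms by simp
  thus "f $ n = g $ n" by simp
qed

lemma Gs_diff: "of_int (d - c) * ((Gs c :: 'a::ring_1 fps) * Gs d) = Gs d - Gs c"
proof -
  let ?x = "fps_X :: 'a fps"
  let ?c = "Gs c :: 'a fps" and ?d = "Gs d :: 'a fps"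
  have ec: "?c = ?x + of_int c * (?x * ?c)" using Gs_eq[of c, unfolded fps_of_int] .
  have ed: "?d = ?x + of_int d * (?x * ?d)" using Gs_eq[of d, unfolded fps_of_int] .
  have xc: "?x * ?c = ?c * ?x" by (rule fps_mult_fps_X_commute)
  have x1: "?x * ?d = ?c * ?d - of_int c * (?x * ?c * ?d)"
  proof -
    have "?x = ?c - of_int c * (?x * ?c)" by (metis ec add_diff_cancel_right')
    hence "?x * ?d = (?c - of_int c * (?x * ?c)) * ?d" by (rule arg_cong[where f="\<lambda>y. y * ?d"])
    thus ?thesis by (simp add: algebra_simps)
  qed
  have x2: "?c * ?x = ?c * ?d - of_int d * (?x * ?c * ?d)"
  proof -
    have "?x = ?d - of_int d * (?x * ?d)" by (metis ed add_diff_cancel_right')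
    hence "?c * ?x = ?c * (?d - of_int d * (?x * ?d))" by (rule arg_cong[where f="\<lambda>y. ?c * y"])
    also have "\<dots> = ?c * ?d - ?c * (of_int d * (?x * ?d))" by (simp add: algebra_simps)
    also have "?c * (of_int d * (?x * ?d)) = of_int d * (?x * ?c * ?d)"
    proof -
      have "?c * (of_int d * (?x * ?d)) = (?c * of_int d) * (?x * ?d)" by (simp add: mult.assoc)
      also have "?c * of_int d = of_int d * ?c" by (rule mult_of_int_commute[symmetric])
      also have "of_int d * ?c * (?x * ?d) = of_int d * ((?c * ?x) * ?d)" by (simp add: mult.assoc)
      finally show ?thesis by (simp add: xc mult.assoc)
    qed
    finally show ?thesis .
  qed
  have s1: "?x * (?d - ?c) = ?x * ?d - ?c * ?x" by (simp add: algebra_simps xc)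
  have s2: "?x * ?d - ?c * ?x = of_int (d - c) * (?x * ?c * ?d)" unfolding x1 x2 by (simp add: algebra_simps)
  have s3: "of_int (d - c) * (?x * ?c * ?d) = (of_int (d - c) * ?x) * (?c * ?d)" by (simp only: mult.assoc)
  have s4: "of_int (d - c) * ?x = ?x * of_int (d - c)" by (rule mult_of_int_commute)
  have s5: "?x * of_int (d - c) * (?c * ?d) = ?x * (of_int (d - c) * (?c * ?d))" by (simp only: mult.assoc)
  have "?x * (?d - ?c) = ?x * (of_int (d - c) * (?c * ?d))"
    using s1 s2 s3 s4 s5 by metis
  from X_cancel[OF this] show ?thesis by (rule sym)
qed




definition eqN :: "nat \<Rightarrow> 'a::ring_1 fps \<Rightarrow> 'a fps \<Rightarrow> bool" where
  "eqN N f g \<longleftrightarrow> (\<forall>n<N. f$n = g$n)"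

lemma eqN_refl: "eqN N f f" by (simp add: eqN_def)
lemma eqN_sym: "eqN N f g \<Longrightarrow> eqN N g f" by (simp add: eqN_def)
lemma eqN_trans: "eqN N f g \<Longrightarrow> eqN N g h \<Longrightarrow> eqN N f h" by (simp add: eqN_def)
lemma eqN_add: "eqN N f f' \<Longrightarrow> eqN N g g' \<Longrightarrow> eqN N (f + g) (f' + g')"
  by (simp add: eqN_def)
lemma eqN_diff: "eqN N f f' \<Longrightarrow> eqN N g g' \<Longrightarrow> eqN N (f - g) (f' - g')"
  by (simp add: eqN_def)
lemma eqN_mult:
  assumes "eqN N f f'" "eqN N g g'" shows "eqN N (f * g) (f' * g')"
  unfolding eqN_def fps_mult_nth
proof (intro allI impI sum.cong refl)
  fix n i assume "n < N" "i \<in> {0..n}"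
  thus "f $ i * g $ (n - i) = f' $ i * g' $ (n - i)" using assms by (simp add: eqN_def)
qed
lemma eqN_all: "(\<And>N. eqN N f g) \<Longrightarrow> f = g"
  by (rule fps_ext) (meson eqN_def lessI)

definition Ptr :: "(nat \<Rightarrow> 'a::ring_1) \<Rightarrow> int \<Rightarrow> nat \<Rightarrow> 'a fps" where
  "Ptr A c N = (\<Sum>r<N. fps_const (A r) * Gs c ^ r)"

lemma Ptr_nth: "(Ptr A c N) $ n = (\<Sum>r<N. A r * of_int (Wi c n r))"
  by (simp add: Ptr_def fps_sum_nth Gs_pow_nth)

lemma shser_eqN: "eqN N (shser A c) (Ptr A c N)"
  unfolding eqN_def
proof (intro allI impI)
  fix n assume n: "n < N"
  show "shser A c $ n = Ptr A c N $ n"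
  proof (cases "n = 0")
    case True
    then obtain M where M: "N = Suc M" using n by (cases N) auto
    have "Ptr A c N $ n = A 0" unfolding Ptr_nth M True sum.lessThan_Suc_shift by (simp add: Wi_def)
    then show ?thesis using True by (simp add: shser_def)
  next
    case False
    have "Ptr A c N $ n = (\<Sum>r\<in>{1..n}. A r * of_int (Wi c n r))"
      unfolding Ptr_nth
      by (rule sum.mono_neutral_right) (use n False in \<open>auto simp: Wi_def\<close>)
    also have "\<dots> = (\<Sum>r = 1..n. of_int (c ^ (n - r)) * of_nat ((n - 1) choose (n - r)) * A r)"
    proof (rule sum.cong[OF refl])
      fix r assume r: "r \<in> {1..n}"
      hence w: "Wi c n r = c ^ (n - r) * int ((n - 1) choose (n - r))" by (simp add: Wi_def)
      have "A r * of_int (Wi c n r) = of_int (Wi c n r) * A r" by (rule mult_of_int_commute[symmetric])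
      also have "\<dots> = of_int (c ^ (n - r)) * of_nat ((n - 1) choose (n - r)) * A r"
        unfolding w by (simp only: of_int_mult of_int_of_nat_eq)
      finally show "A r * of_int (Wi c n r) = of_int (c ^ (n - r)) * of_nat ((n - 1) choose (n - r)) * A r" .
    qed
    also have "\<dots> = shser A c $ n" using False by (simp add: shser_def)
    finally show ?thesis by simp
  qed
qed

definition DS :: "int \<Rightarrow> int \<Rightarrow> nat \<Rightarrow> (nat \<Rightarrow> nat \<Rightarrow> 'a::ring_1) \<Rightarrow> 'a fps" where
  "DS c d N F = (\<Sum>r<N. \<Sum>s<N. fps_const (F r s) * (Gs c ^ r * Gs d ^ s))"

lemma Gpow_comm: "(Gs c ^ r :: 'a::ring_1 fps) * Q = Q * Gs c ^ r"
  by (rule intc_commute[OF intc_power[OF intc_Gs]])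

lemma term_mult:
  "fps_const a * Gs c ^ r * (fps_const b * Gs d ^ s) = fps_const (a * b) * ((Gs c ^ r :: 'a::ring_1 fps) * Gs d ^ s)"
proof -
  have "fps_const a * Gs c ^ r * (fps_const b * Gs d ^ s) = fps_const a * (Gs c ^ r * fps_const b) * (Gs d ^ s :: 'a fps)"
    by (simp only: mult.assoc)
  also have "Gs c ^ r * fps_const b = fps_const b * (Gs c ^ r :: 'a fps)" by (rule Gpow_comm)
  finally show ?thesis by (simp only: mult.assoc fps_const_mult[symmetric])
qed

lemma Ptr_prod: "Ptr X c N * Ptr Y d N = DS c d N (\<lambda>r s. X r * Y s)"
  unfolding Ptr_def DS_def sum_distrib_right sum_distrib_left
  by (simp only: term_mult, rule sum.swap)

lemma Ptr_prod_swap: "Ptr X d N * Ptr Y c N = DS c d N (\<lambda>r s. X s * Y r)"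
proof -
  have "Ptr X d N * Ptr Y c N = (\<Sum>s<N. \<Sum>r<N. fps_const (X s * Y r) * (Gs d ^ s * Gs c ^ r))"
    unfolding Ptr_def sum_distrib_right sum_distrib_left by (simp only: term_mult, rule sum.swap)
  also have "\<dots> = (\<Sum>s<N. \<Sum>r<N. fps_const (X s * Y r) * (Gs c ^ r * Gs d ^ s))"
    by (simp only: Gpow_comm[of d])
  also have "\<dots> = DS c d N (\<lambda>r s. X s * Y r)"
    unfolding DS_def by (rule sum.swap)
  finally show ?thesis .
qed

lemma DS_diff: "DS c d N F - DS c d N G = DS c d N (\<lambda>r s. F r s - G r s)"
  unfolding DS_def by (simp only: sum_subtractf[symmetric] left_diff_distrib[symmetric] fps_const_sub)

lemma DS_scal: "of_int e * DS c d N F = DS c d N (\<lambda>r s. of_int e * F r s)"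
  unfolding DS_def sum_distrib_left
  by (simp only: mult.assoc[symmetric] fps_of_int[symmetric] fps_const_mult)

lemma Phi_rec: "of_int (d - c) * ((Gs c :: 'a::ring_1 fps) ^ Suc r * Gs d ^ Suc s)
   = Gs c ^ r * Gs d ^ Suc s - Gs c ^ Suc r * Gs d ^ s"
proof -
  let ?c = "Gs c :: 'a fps" and ?d = "Gs d :: 'a fps" and ?k = "of_int (d - c) :: 'a fps"
  have "?c ^ Suc r * ?d ^ Suc s = ?c ^ r * (?c * ?d) * ?d ^ s"
    by (simp only: power_Suc2[of ?c r] power_Suc[of ?d s] mult.assoc)
  hence "?k * (?c ^ Suc r * ?d ^ Suc s) = ?k * (?c ^ r * (?c * ?d) * ?d ^ s)" by simp
  also have "\<dots> = (?k * ?c ^ r) * (?c * ?d) * ?d ^ s" by (simp only: mult.assoc)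
  also have "?k * ?c ^ r = ?c ^ r * ?k" by (rule mult_of_int_commute)
  also have "?c ^ r * ?k * (?c * ?d) * ?d ^ s = ?c ^ r * (?k * (?c * ?d)) * ?d ^ s" by (simp only: mult.assoc)
  also have "?k * (?c * ?d) = ?d - ?c" by (rule Gs_diff)
  also have "?c ^ r * (?d - ?c) * ?d ^ s = ?c ^ r * ?d ^ Suc s - ?c ^ Suc r * ?d ^ s"
    by (simp only: power_Suc2[of ?c r] power_Suc[of ?d s] mult.assoc right_diff_distrib left_diff_distrib)
  finally show ?thesis .
qed




lemma small_term:
  assumes "N \<le> a + b"
  shows "eqN N (fps_const k * ((Gs c :: 'a::ring_1 fps) ^ a * Gs d ^ b)) 0"
  unfolding eqN_def
proof (intro allI impI)
  fix n assume "n < N"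
  have "((Gs c :: 'a fps) ^ a * Gs d ^ b) $ n = 0"
    by (rule mult_small[of a _ b]) (use assms \<open>n < N\<close> in \<open>auto simp: Gs_pow_small\<close>)
  thus "(fps_const k * ((Gs c :: 'a fps) ^ a * Gs d ^ b)) $ n = 0 $ n" by simp
qed

lemma eqN_sum0:
  assumes "\<And>i. i \<in> S \<Longrightarrow> eqN N (f i) 0"
  shows "eqN N (sum f S) 0"
  using assms unfolding eqN_def by (simp add: fps_sum_nth)

lemma DS_tele:
  fixes K :: "nat \<Rightarrow> nat \<Rightarrow> 'a::ring_1"
  assumes K0s: "\<And>s. K 0 s = 0" and K0r: "\<And>r. K r 0 = 0"
  shows "eqN (Suc M) (of_int (d - c) * DS c d (Suc M) K)
           (DS c d (Suc M) (\<lambda>r s. K (Suc r) s) - DS c d (Suc M) (\<lambda>r s. K r (Suc s)))"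
proof -
  let ?k = "of_int (d - c) :: 'a fps"
  let ?P = "\<lambda>r s. (Gs c :: 'a fps) ^ r * Gs d ^ s"
  define S1 where "S1 = (\<Sum>r<M. \<Sum>s<M. fps_const (K (Suc r) (Suc s)) * ?P r (Suc s))"
  define S2 where "S2 = (\<Sum>r<M. \<Sum>s<M. fps_const (K (Suc r) (Suc s)) * ?P (Suc r) s)"
  define E1 where "E1 = (\<Sum>s<M. fps_const (K (Suc M) (Suc s)) * ?P M (Suc s))"
  define E2 where "E2 = (\<Sum>r<M. fps_const (K (Suc r) (Suc M)) * ?P (Suc r) M)"
  have comm: "?k * (fps_const a * Q) = fps_const a * (?k * Q)" for a Q
  proof -
    have "?k * (fps_const a * Q) = (?k * fps_const a) * Q" by (simp only: mult.assoc)
    also have "?k * fps_const a = fps_const a * ?k" by (rule mult_of_int_commute)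
    finally show ?thesis by (simp only: mult.assoc)
  qed
  have L: "?k * DS c d (Suc M) K = S1 - S2"
  proof -
    have "?k * DS c d (Suc M) K = (\<Sum>r<Suc M. \<Sum>s<Suc M. fps_const (K r s) * (?k * ?P r s))"
      unfolding DS_def sum_distrib_left by (simp only: comm)
    also have "\<dots> = (\<Sum>r<M. \<Sum>s<M. fps_const (K (Suc r) (Suc s)) * (?k * ?P (Suc r) (Suc s)))"
      by (simp add: sum.lessThan_Suc_shift K0s K0r del: sum.lessThan_Suc)
    also have "\<dots> = (\<Sum>r<M. \<Sum>s<M. fps_const (K (Suc r) (Suc s)) * (?P r (Suc s) - ?P (Suc r) s))"
      by (simp only: Phi_rec)
    also have "\<dots> = S1 - S2"
      unfolding S1_def S2_def by (simp only: right_diff_distrib sum_subtractf)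
    finally show ?thesis .
  qed
  have R1: "DS c d (Suc M) (\<lambda>r s. K (Suc r) s) = S1 + E1"
  proof -
    have "DS c d (Suc M) (\<lambda>r s. K (Suc r) s) = (\<Sum>r<Suc M. \<Sum>s<M. fps_const (K (Suc r) (Suc s)) * ?P r (Suc s))"
      unfolding DS_def by (simp add: sum.lessThan_Suc_shift[where n = M] K0r del: sum.lessThan_Suc)
    also have "\<dots> = S1 + E1" unfolding S1_def E1_def by (rule sum.lessThan_Suc)
    finally show ?thesis .
  qed
  have R2: "DS c d (Suc M) (\<lambda>r s. K r (Suc s)) = S2 + E2"
  proof -
    have "DS c d (Suc M) (\<lambda>r s. K r (Suc s)) = (\<Sum>r<M. \<Sum>s<Suc M. fps_const (K (Suc r) (Suc s)) * ?P (Suc r) s)"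
      unfolding DS_def by (simp add: sum.lessThan_Suc_shift[where n = M] K0s del: sum.lessThan_Suc)
    also have "\<dots> = (\<Sum>r<M. (\<Sum>s<M. fps_const (K (Suc r) (Suc s)) * ?P (Suc r) s) + fps_const (K (Suc r) (Suc M)) * ?P (Suc r) M)"
      by (simp only: sum.lessThan_Suc)
    also have "\<dots> = S2 + E2" unfolding S2_def E2_def by (rule sum.distrib)
    finally show ?thesis .
  qed
  have e1: "eqN (Suc M) E1 0" unfolding E1_def
    by (rule eqN_sum0, rule small_term) simp
  have e2: "eqN (Suc M) E2 0" unfolding E2_def
    by (rule eqN_sum0, rule small_term) simp
  have "eqN (Suc M) (S1 - S2) ((S1 + E1) - (S2 + E2))"
    using e1 e2 by (simp add: eqN_def)
  thus ?thesis unfolding L R1 R2 .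
qed




lemma master:
  fixes A B C D :: "nat \<Rightarrow> 'a::ring_1" and e \<sigma> c d :: int
  assumes K0s: "\<And>s. A 0 * B s - of_int e * B s * A 0 = 0"
    and K0r: "\<And>r. A r * B 0 - of_int e * B 0 * A r = 0"
    and rel: "\<And>r s. (A (Suc r) * B s - of_int e * B s * A (Suc r))
                   - (A r * B (Suc s) - of_int e * B (Suc s) * A r) = of_int \<sigma> * (C r * D s - C s * D r)"
  shows "of_int (d - c) * (shser A c * shser B d - of_int e * (shser B d * shser A c))
       = of_int \<sigma> * (shser C c * shser D d - shser C d * shser D c)"
proof (rule eqN_all)
  fix N
  show "eqN N (of_int (d - c) * (shser A c * shser B d - of_int e * (shser B d * shser A c)))
              (of_int \<sigma> * (shser C c * shser D d - shser C d * shser D c))"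
  proof (cases N)
    case 0 then show ?thesis by (simp add: eqN_def)
  next
    case (Suc M)
    define K where "K = (\<lambda>r s. A r * B s - of_int e * B s * A r)"
    have L: "eqN N (of_int (d - c) * (shser A c * shser B d - of_int e * (shser B d * shser A c)))
                 (of_int (d - c) * (Ptr A c N * Ptr B d N - of_int e * (Ptr B d N * Ptr A c N)))"
      by (intro eqN_mult eqN_diff eqN_refl shser_eqN)
    have R: "eqN N (of_int \<sigma> * (shser C c * shser D d - shser C d * shser D c))
                 (of_int \<sigma> * (Ptr C c N * Ptr D d N - Ptr C d N * Ptr D c N))"
      by (intro eqN_mult eqN_diff eqN_refl shser_eqN)
    have L2: "of_int (d - c) * (Ptr A c N * Ptr B d N - of_int e * (Ptr B d N * Ptr A c N))
            = of_int (d - c) * DS c d N K"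
      by (simp only: Ptr_prod[where X=A and c=c and N=N and Y=B and d=d]
            Ptr_prod_swap[where X=B and d=d and N=N and Y=A and c=c] DS_scal DS_diff K_def mult.assoc)
    have R2: "of_int \<sigma> * (Ptr C c N * Ptr D d N - Ptr C d N * Ptr D c N)
            = DS c d N (\<lambda>r s. K (Suc r) s) - DS c d N (\<lambda>r s. K r (Suc s))"
      by (simp only: Ptr_prod[where X=C and c=c and N=N and Y=D and d=d]
            Ptr_prod_swap[where X=C and d=d and N=N and Y=D and c=c] DS_scal DS_diff K_def rel)
    have T: "eqN N (of_int (d - c) * DS c d N K) (DS c d N (\<lambda>r s. K (Suc r) s) - DS c d N (\<lambda>r s. K r (Suc s)))"
      unfolding Suc by (rule DS_tele) (simp_all add: K_def K0s K0r)
    show ?thesis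
      using eqN_trans[OF L eqN_trans[OF T[folded L2 R2] eqN_sym[OF R]]] .
  qed
qed

lemma yrel:
  fixes g :: "nat \<Rightarrow> nat \<Rightarrow> nat \<Rightarrow> 'a::ring_1"
  assumes rels: "yangian_rels g" and ij: "i \<in> {1,2}" "j \<in> {1,2}" "k \<in> {1,2}" "l \<in> {1,2}"
    and e: "e = (-1::int) ^ ((par i + par j) * (par k + par l))"
    and \<sigma>: "\<sigma> = (-1::int) ^ (par i * par j + par i * par k + par j * par k)"
  shows "K0s": "\<And>s. T g i j 0 * T g k l s - of_int e * T g k l s * T g i j 0 = 0"
    and "K0r": "\<And>r. T g i j r * T g k l 0 - of_int e * T g k l 0 * T g i j r = 0"
    and "rel": "\<And>r s. (T g i j (Suc r) * T g k l s - of_int e * T g k l s * T g i j (Suc r))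
                   - (T g i j r * T g k l (Suc s) - of_int e * T g k l (Suc s) * T g i j r)
                 = of_int \<sigma> * (T g k j r * T g i l s - T g k j s * T g i l r)"
proof -
  let ?A = "T g i j" and ?B = "T g k l" and ?C = "T g k j" and ?D = "T g i l"
  define K where "K = (\<lambda>r s. ?A r * ?B s - of_int e * ?B s * ?A r)"
  have Y0: "\<forall>r>0. \<forall>s>0. T g i j r * T g k l s
          - (-1) ^ ((par i + par j) * (par k + par l)) * T g k l s * T g i j r
        = (-1) ^ (par i * par j + par i * par k + par j * par k) *
          (\<Sum>t = 0..<min r s. T g k j t * T g i l (r + s - 1 - t)
                               - T g k j (r + s - 1 - t) * T g i l t)"
    using rels ij unfolding yangian_rels_def by blast
  have Y: "K r s = of_int \<sigma> * (\<Sum>t<min r s. ?C t * ?D (r + s - 1 - t) - ?C (r + s - 1 - t) * ?D t)"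
    if "0 < r" "0 < s" for r s
    using Y0 that unfolding K_def e \<sigma> atLeast0LessThan by simp
  show K0s: "\<And>s. ?A 0 * ?B s - of_int e * ?B s * ?A 0 = 0"
  proof -
    fix s
    show "?A 0 * ?B s - of_int e * ?B s * ?A 0 = 0"
    proof (cases "i = j")
      case True
      have "even ((par i + par j) * (par k + par l))" using True by simp
      hence "e = 1" using e by simp
      thus ?thesis using True by (simp add: T_def)
    qed (simp add: T_def)
  qed
  show K0r: "\<And>r. ?A r * ?B 0 - of_int e * ?B 0 * ?A r = 0"
  proof -
    fix r
    show "?A r * ?B 0 - of_int e * ?B 0 * ?A r = 0"
    proof (cases "k = l")
      case True
      have "even ((par i + par j) * (par k + par l))" using True by simp
      hence "e = 1" using e by simp
      thus ?thesis using True by (simp add: T_def)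
    qed (simp add: T_def)
  qed
  fix r s
  let ?f = "\<lambda>t. ?C t * ?D (r + s - t) - ?C (r + s - t) * ?D t"
  show "K (Suc r) s - K r (Suc s) = of_int \<sigma> * (?C r * ?D s - ?C s * ?D r)"
  proof (cases "r = 0")
    case r0: True
    show ?thesis
    proof (cases "s = 0")
      case True
      thus ?thesis using r0 K0s K0r unfolding K_def by simp
    next
      case False
      have "K (Suc 0) s = of_int \<sigma> * (?C 0 * ?D s - ?C s * ?D 0)"
        using Y[of "Suc 0" s] False by simp
      moreover have "K 0 (Suc s) = 0" using K0s unfolding K_def by simp
      ultimately show ?thesis using r0 by simp
    qed
  next
    case rpos: False
    show ?thesis
    proof (cases "s = 0")
      case True
      have "K r (Suc 0) = of_int \<sigma> * (?C 0 * ?D r - ?C r * ?D 0)"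
        using Y[of r "Suc 0"] rpos by simp
      moreover have "K (Suc r) 0 = 0" using K0r unfolding K_def by simp
      ultimately show ?thesis using True by (simp add: algebra_simps)
    next
      case spos: False
      have Y1: "K (Suc r) s = of_int \<sigma> * (\<Sum>t<min (Suc r) s. ?f t)"
        using Y[of "Suc r" s] spos by simp
      have Y2: "K r (Suc s) = of_int \<sigma> * (\<Sum>t<min r (Suc s). ?f t)"
        using Y[of r "Suc s"] rpos by simp
      consider "r < s" | "r = s" | "s < r" by linarith
      then show ?thesis
      proof cases
        case 1
        hence "min (Suc r) s = Suc r" "min r (Suc s) = r" by auto
        thus ?thesis unfolding Y1 Y2 by (simp add: algebra_simps)
      next
        case 2
        thus ?thesis unfolding Y1 Y2 by simp
      next
        case 3
        hence "min (Suc r) s = s" "min r (Suc s) = Suc s" by auto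
        thus ?thesis unfolding Y1 Y2 by (simp add: algebra_simps)
      qed
    qed
  qed
qed




lemma master_T:
  fixes g :: "nat \<Rightarrow> nat \<Rightarrow> nat \<Rightarrow> 'a::ring_1" and c d :: int
  assumes rels: "yangian_rels g" and ij: "i \<in> {1,2}" "j \<in> {1,2}" "k \<in> {1,2}" "l \<in> {1,2}"
    and e: "e = (-1::int) ^ ((par i + par j) * (par k + par l))"
    and \<sigma>: "\<sigma> = (-1::int) ^ (par i * par j + par i * par k + par j * par k)"
  shows "of_int (d - c) * (tser g i j c * tser g k l d - of_int e * (tser g k l d * tser g i j c))
       = of_int \<sigma> * (tser g k j c * tser g i l d - tser g k j d * tser g i l c)"
  unfolding tser_def
  by (rule master[OF yrel(1)[OF assms] yrel(2)[OF assms] yrel(3)[OF assms]])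

theorem lemmaA1:
  fixes \<iota> :: "'k::alg_closed_field \<Rightarrow> 'a::ring_1"
    and g :: "nat \<Rightarrow> nat \<Rightarrow> nat \<Rightarrow> 'a"
  assumes char: "CHAR('k) > 2"
    and hom1: "\<iota> 1 = 1"
    and hom_add: "\<And>x y. \<iota> (x + y) = \<iota> x + \<iota> y"
    and hom_mult: "\<And>x y. \<iota> (x * y) = \<iota> x * \<iota> y"
    and central: "\<And>c a. \<iota> c * a = a * \<iota> c"
    and rels: "yangian_rels g"
  shows "tser g 1 1 1 * tser g 1 2 0 = tser g 1 2 1 * tser g 1 1 0
       \<and> tser g 1 1 0 * tser g 2 1 1 = tser g 2 1 0 * tser g 1 1 1
       \<and> tser g 1 2 1 * tser g 1 2 0 = 0
       \<and> (\<forall>k::nat. of_nat (k + 1) * (tser g 2 1 0 * tser g 1 1 (int k))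
            = of_nat k * (tser g 1 1 (int k) * tser g 2 1 0) + tser g 2 1 (int k) * tser g 1 1 0)"
proof (intro conjI allI)
  have p1: "par 1 = 0" and p2: "par 2 = 1" by (simp_all add: par_def)
  have i1: "(1::nat) \<in> {1,2}" and i2: "(2::nat) \<in> {1,2}" by simp_all
  show "tser g 1 1 1 * tser g 1 2 0 = tser g 1 2 1 * tser g 1 1 0"
  proof -
    have h: "of_int (1 - 0) * (tser g 1 1 0 * tser g 1 2 1 - of_int 1 * (tser g 1 2 1 * tser g 1 1 0))
       = of_int 1 * (tser g 1 1 0 * tser g 1 2 1 - tser g 1 1 1 * tser g 1 2 0)"
      by (rule master_T[OF rels i1 i1 i1 i2]) (simp_all add: par_def)
    thus ?thesis by simp
  qed
  show "tser g 1 1 0 * tser g 2 1 1 = tser g 2 1 0 * tser g 1 1 1"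
  proof -
    have h: "of_int (1 - 0) * (tser g 1 1 0 * tser g 2 1 1 - of_int 1 * (tser g 2 1 1 * tser g 1 1 0))
       = of_int 1 * (tser g 2 1 0 * tser g 1 1 1 - tser g 2 1 1 * tser g 1 1 0)"
      by (rule master_T[OF rels i1 i1 i2 i1]) (simp_all add: par_def)
    thus ?thesis by simp
  qed
  show "tser g 1 2 1 * tser g 1 2 0 = 0"
  proof -
    let ?X = "tser g 1 2 1 * tser g 1 2 0" and ?Y = "tser g 1 2 0 * tser g 1 2 1"
    have h: "of_int (0 - 1) * (?X - of_int (-1) * ?Y) = of_int 1 * (?X - ?Y)"
      by (rule master_T[OF rels i1 i2 i1 i2]) (simp_all add: par_def)
    hence XX0: "- ?X = ?X" by (simp add: algebra_simps)
    have XX: "?X + ?X = 0" by (metis XX0 add.right_inverse)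
    have two: "(2::'k) \<noteq> 0"
    proof
      assume "(2::'k) = 0"
      hence "of_nat 2 = (0::'k)" by simp
      hence "CHAR('k) dvd 2" by (simp only: of_nat_eq_0_iff_char_dvd)
      hence "CHAR('k) \<le> 2" by (rule dvd_imp_le) simp
      thus False using char by simp
    qed
    let ?h = "\<iota> (inverse 2)"
    have hh: "?h + ?h = 1"
    proof -
      have "?h + ?h = \<iota> (inverse 2 + inverse 2)" by (rule hom_add[symmetric])
      also have "inverse 2 + inverse 2 = (1::'k)" using two by (simp add: field_simps)
      finally show ?thesis using hom1 by simp
    qed
    have "?X = fps_const (?h + ?h) * ?X" using hh by simp
    also have "\<dots> = fps_const ?h * (?X + ?X)"
      by (simp only: fps_const_add[symmetric] distrib_left distrib_right)
    also have "\<dots> = 0" using XX by simp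
    finally show ?thesis .
  qed
  fix k :: nat
  show "of_nat (k + 1) * (tser g 2 1 0 * tser g 1 1 (int k))
            = of_nat k * (tser g 1 1 (int k) * tser g 2 1 0) + tser g 2 1 (int k) * tser g 1 1 0"
  proof -
    let ?P = "tser g 1 1 (int k)" and ?Q = "tser g 2 1 0" and ?R = "tser g 2 1 (int k)" and ?S = "tser g 1 1 0"
    have h: "of_int (0 - int k) * (?P * ?Q - of_int 1 * (?Q * ?P)) = of_int 1 * (?R * ?S - ?Q * ?P)"
      by (rule master_T[OF rels i1 i1 i2 i1]) (simp_all add: par_def)
    hence h2: "?R * ?S = ?Q * ?P - of_nat k * (?P * ?Q) + of_nat k * (?Q * ?P)"
      by (simp add: algebra_simps)
    show ?thesis unfolding h2 by (simp add: algebra_simps)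
  qed
qed


end
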